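(* Let $R_o$ be a weak consistent digital ray system with root $o=(0,0)$ in $\mathbb{Z}^2$ whose error is less than $1.5$. Suppose $v\in Q_1$ does not extend to diagonal $d$, for some integer $d>D(v)$. Then $v^\nwarrow=(v_x-1,v_y+1)$ extends to diagonal $d$ if $v^\nwarrow\in Q_1$, and $v^\searrow=(v_x+1,v_y-1)$ extends to diagonal $d$ if $v^\searrow\in Q_1$.
   Context: The grid graph on $\mathbb{Z}^2$ has edges between points at $L_1$ distance $1$. A weak consistent digital ray system (WCDR) with root $o$ assigns to each $p\in\mathbb{Z}^2$ a set $R_o(p)$ such that: (S1) $R_o(p)$ is the vertex set of a path from $o$ to $p$ in the grid graph; (S3) for every $q\in R_o(p)$, $R_o(q)\subseteq R_o(p)$; (S5) if $p_x=o_x$ (resp. $p_y=o_y$) then all points of $R_o(p)$ have $x$-coordinate $o_x$ (resp. $y$-coordinate $o_y$). Its error is $\sup_p \max_{v\in R_o(p)}\mathrm{dist}_\infty(v,\overline{op})$, with $\overline{op}$ the Euclidean segment and $\mathrm{dist}_\infty$ the $L_\infty$ distance. $Q_1=\{p\in\mathbb{Z}^2:p_x\ge0,p_y\ge0\}$, $D(p)=p_x+p_y$. A point $v$ extends to diagonal $d$ if there is $p\in Q_1$ with $D(p)=d$ and $v\in R_o(p)$. *)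

theory Defs
  imports "HOL-Analysis.Analysis"
begin

type_synonym pt = "int \<times> int"

definition grid_adj :: "pt \<Rightarrow> pt \<Rightarrow> bool" where
  "grid_adj a b \<longleftrightarrow> \<bar>fst a - fst b\<bar> + \<bar>snd a - snd b\<bar> = 1"

definition is_grid_path_set :: "pt \<Rightarrow> pt \<Rightarrow> pt set \<Rightarrow> bool" where
  "is_grid_path_set a b S \<longleftrightarrow>
     (\<exists>xs. xs \<noteq> [] \<and> hd xs = a \<and> last xs = b \<and> distinct xs \<and>
           (\<forall>i. Suc i < length xs \<longrightarrow> grid_adj (xs ! i) (xs ! Suc i)) \<and>
           set xs = S)"

definition wcdr :: "(pt \<Rightarrow> pt set) \<Rightarrow> pt \<Rightarrow> bool" where
  "wcdr R r \<longleftrightarrow>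
     (\<forall>p. is_grid_path_set r p (R p)) \<and>
     (\<forall>p. \<forall>q\<in>R p. R q \<subseteq> R p) \<and>
     (\<forall>p. fst p = fst r \<longrightarrow> (\<forall>v\<in>R p. fst v = fst r)) \<and>
     (\<forall>p. snd p = snd r \<longrightarrow> (\<forall>v\<in>R p. snd v = snd r))"

definition dist_inf_seg :: "pt \<Rightarrow> pt \<Rightarrow> pt \<Rightarrow> real" where
  "dist_inf_seg v r p =
     (INF t\<in>{0..1::real}.
        max \<bar>real_of_int (fst v) - ((1 - t) * real_of_int (fst r) + t * real_of_int (fst p))\<bar>
            \<bar>real_of_int (snd v) - ((1 - t) * real_of_int (snd r) + t * real_of_int (snd p))\<bar>)"

definition wcdr_error :: "(pt \<Rightarrow> pt set) \<Rightarrow> pt \<Rightarrow> ereal" where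
  "wcdr_error R r = (SUP p. SUP v\<in>R p. ereal (dist_inf_seg v r p))"

definition Q1 :: "pt set" where
  "Q1 = {p. fst p \<ge> 0 \<and> snd p \<ge> 0}"

definition D :: "pt \<Rightarrow> int" where
  "D p = fst p + snd p"

definition extends_to :: "(pt \<Rightarrow> pt set) \<Rightarrow> pt \<Rightarrow> int \<Rightarrow> bool" where
  "extends_to R v d \<longleftrightarrow> (\<exists>p\<in>Q1. D p = d \<and> v \<in> R p)"

end

theory Submission
  imports Defs
begin

lemma list_ivt:
  fixes xs :: "pt list"
  assumes "xs \<noteq> []" "\<forall>i. Suc i < length xs \<longrightarrow> grid_adj (xs ! i) (xs ! Suc i)"
    "D (hd xs) \<le> c" "c \<le> D (last xs)"
  shows "\<exists>x\<in>set xs. D x = c"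
  using assms
proof (induction xs)
  case Nil then show ?case by simp
next
  case (Cons x ys)
  show ?case
  proof (cases "D x = c")
    case True then show ?thesis by simp
  next
    case False
    then have lt: "D x < c" using Cons.prems by simp
    have ys: "ys \<noteq> []" using Cons.prems lt by auto
    have adj: "grid_adj x (hd ys)" using Cons.prems(2)[rule_format, of 0] ys
      by (simp add: hd_conv_nth)
    have "D (hd ys) \<le> c" using adj lt unfolding grid_adj_def D_def by auto
    moreover have "\<forall>i. Suc i < length ys \<longrightarrow> grid_adj (ys ! i) (ys ! Suc i)"
      using Cons.prems(2) by (metis Suc_less_eq length_Cons nth_Cons_Suc)
    moreover have "c \<le> D (last ys)" using Cons.prems ys by simp
    ultimately show ?thesis using Cons.IH ys by auto
  qed
qed

lemma path_ivt:
  assumes "is_grid_path_set (0,0) p S" "0 \<le> c" "c \<le> D p"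
  shows "\<exists>x\<in>S. D x = c"
  using assms list_ivt unfolding is_grid_path_set_def by (force simp: D_def)

lemma err_bound:
  assumes "wcdr_error R (0, 0) < ereal (3 / 2)" "w \<in> R p"
  shows "\<exists>t\<in>{0..1::real}. \<bar>real_of_int (fst w) - t * real_of_int (fst p)\<bar> < 3/2
            \<and> \<bar>real_of_int (snd w) - t * real_of_int (snd p)\<bar> < 3/2"
proof -
  have "ereal (dist_inf_seg w (0,0) p) \<le> wcdr_error R (0, 0)"
    unfolding wcdr_error_def
    by (meson SUP_upper UNIV_I assms(2) order_trans)
  then have "ereal (dist_inf_seg w (0,0) p) < ereal (3/2)" using assms(1) by (rule order_le_less_trans)
  then have "dist_inf_seg w (0,0) p < 3/2" by simp
  then have "\<exists>t\<in>{0..1::real}. max \<bar>real_of_int (fst w) - t * real_of_int (fst p)\<bar>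
            \<bar>real_of_int (snd w) - t * real_of_int (snd p)\<bar> < 3/2"
    unfolding dist_inf_seg_def
    by (subst (asm) cINF_less_iff) (auto intro!: bdd_belowI[where m=0])
  then show ?thesis unfolding max_less_iff_conj by blast
qed

lemma geo1r:
  fixes a b wx wy X Y :: real
  assumes "wx \<ge> a + 1 \<or> wx \<le> a - 2" "wx + wy = a + b" "\<bar>wx - X\<bar> < 3/2" "\<bar>wy - Y\<bar> < 3/2"
    "X \<le> a - 1/2 \<and> Y \<le> b + 1/2 \<or> X > a - 1/2 \<and> Y > b + 1/2"
  shows False
  using assms unfolding abs_less_iff by linarith

lemma geo1:
  fixes a b wx wy :: int and s :: real
  assumes "a \<ge> 1" "b \<ge> 0" "wx + wy = a + b"
    "\<bar>wx - s * (2*a - 1)\<bar> < 3/2" "\<bar>wy - s * (2*b + 1)\<bar> < 3/2"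
  shows "wx = a \<or> wx = a - 1"
proof (rule ccontr)
  assume "\<not> ?thesis"
  then have c: "wx \<ge> a + 1 \<or> wx \<le> a - 2" by linarith
  have r: "real_of_int wx + real_of_int wy = real_of_int a + real_of_int b"
    using assms(3) by (metis of_int_add)
  have c': "real_of_int wx \<ge> real_of_int a + 1 \<or> real_of_int wx \<le> real_of_int a - 2"
    using c by (metis of_int_1 of_int_add of_int_diff of_int_le_iff of_int_numeral)
  have ab: "real_of_int a \<ge> 1" "real_of_int b \<ge> 0" using assms by simp_all
  have cs: "real_of_int (2*a-1) = 2*real_of_int a - 1" "real_of_int (2*b+1) = 2*real_of_int b + 1"
    by simp_all
  have "s * real_of_int (2*a - 1) \<le> real_of_int a - 1/2 \<and> s * real_of_int (2*b + 1) \<le> real_of_int b + 1/2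
     \<or> s * real_of_int (2*a - 1) > real_of_int a - 1/2 \<and> s * real_of_int (2*b + 1) > real_of_int b + 1/2"
  proof (cases "s \<le> 1/2")
    case True
    have m1: "s * (2*a - 1) \<le> 1/2 * (2*a-1)"
      by (rule mult_right_mono) (use True ab in auto)
    have m2: "s * (2*b + 1) \<le> 1/2 * (2*b+1)"
      by (rule mult_right_mono) (use True ab in auto)
    show ?thesis using m1 m2 cs by simp
  next
    case False
    have m1: "s * (2*a - 1) > 1/2 * (2*a-1)"
      by (rule mult_strict_right_mono) (use False ab in auto)
    have m2: "s * (2*b + 1) > 1/2 * (2*b+1)"
      by (rule mult_strict_right_mono) (use False ab in auto)
    show ?thesis using m1 m2 cs by simp
  qed
  then show False using geo1r[OF c' r assms(4,5)] by blast
qed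

lemma geo2:
  fixes A B k d wx wy :: int and s :: real
  assumes "A \<ge> 1" "B \<ge> 1" "A + B = 2*k" "k \<ge> 1" "d > k" "s \<ge> 0" "wx + wy = d"
    "\<bar>wx - s * A\<bar> < 3/2" "\<bar>wy - s * B\<bar> < 3/2"
  shows "wx \<ge> 0 \<and> wy \<ge> 0"
proof -
  have sA: "s * A \<ge> s" and sB: "s * B \<ge> s" using assms
    by (simp_all add: mult_le_cancel_left1)
  have sum: "s * A + s * B = s * (2 * k)"
    using assms(3) by (metis distrib_left of_int_add of_int_mult of_int_numeral)
  show ?thesis
  proof (rule ccontr)
    assume "\<not> ?thesis"
    then have "wx \<le> -1 \<or> wy \<le> -1" by auto
    moreover
    have "s < 1/2 \<Longrightarrow> s * (2*k) \<le> 1/2 * (2*k)"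
      by (rule mult_right_mono) (use assms in auto)
    ultimately have s2: "s < 1/2 \<Longrightarrow> s * k \<le> k / 2" by simp
    have r: "real_of_int wx + real_of_int wy = real_of_int d" "real_of_int d \<ge> real_of_int k + 1"
      using assms by simp_all
    have sk: "s * A + s * B = 2 * (s * k)" using sum by simp
    have h1: "real_of_int wx - s * A > -3/2" "real_of_int wx - s * A < 3/2"
         "real_of_int wy - s * B > -3/2" "real_of_int wy - s * B < 3/2"
      using assms(8,9) unfolding abs_less_iff by auto
    have s0: "s * A \<ge> 0" "s * B \<ge> 0" using sA sB assms(6) by linarith+
    show False
    proof (cases "wx \<le> -1")
      case True
      then have "real_of_int wx \<le> -1" by simp
      then have "s < 1/2" using h1 sA by linarith
      then show False using s2 r h1 sk s0 \<open>real_of_int wx \<le> -1\<close> by linarith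
    next
      case False
      then have "real_of_int wy \<le> -1" using \<open>wx \<le> -1 \<or> wy \<le> -1\<close> by simp
      then have "s < 1/2" using h1 sB by linarith
      then show False using s2 r h1 sk s0 \<open>real_of_int wy \<le> -1\<close> by linarith
    qed
  qed
qed

lemma key:
  assumes W: "wcdr R (0, 0)"
    and "0 \<le> k" "k \<le> d" "d \<le> D p"
    and dk: "\<And>w. w \<in> R p \<Longrightarrow> D w = k \<Longrightarrow> w = v \<or> w = v'"
    and dq: "\<And>w. w \<in> R p \<Longrightarrow> D w = d \<Longrightarrow> w \<in> Q1"
  shows "extends_to R v d \<or> extends_to R v' d"
proof -
  have P: "\<And>p. is_grid_path_set (0,0) p (R p)" using W unfolding wcdr_def by auto
  have C: "\<And>p q. q \<in> R p \<Longrightarrow> R q \<subseteq> R p" using W unfolding wcdr_def by blast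
  obtain q where q: "q \<in> R p" "D q = d" using path_ivt[OF P] assms by (meson order_trans)
  have qQ: "q \<in> Q1" using dq q by auto
  obtain w where w: "w \<in> R q" "D w = k" using path_ivt[OF P[of q], of k] assms q by auto
  have "w \<in> R p" using C[OF q(1)] w(1) by blast
  then have "w = v \<or> w = v'" using dk w by auto
  then show ?thesis unfolding extends_to_def using qQ q w by auto
qed

theorem lemma6:
  fixes R :: "pt \<Rightarrow> pt set" and v :: pt and d :: int
  assumes "wcdr R (0, 0)"
    and "wcdr_error R (0, 0) < ereal (3 / 2)"
    and "v \<in> Q1"
    and "d > D v"
    and "\<not> extends_to R v d"
  shows "((fst v - 1, snd v + 1) \<in> Q1 \<longrightarrow> extends_to R (fst v - 1, snd v + 1) d) \<and>
         ((fst v + 1, snd v - 1) \<in> Q1 \<longrightarrow> extends_to R (fst v + 1, snd v - 1) d)"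
proof (intro conjI impI)
  obtain a b where v: "v = (a, b)" by fastforce
  have a0: "a \<ge> 0" "b \<ge> 0" using assms(3) v by (auto simp: Q1_def)
  have dv: "d > a + b" using assms(4) v by (simp add: D_def)
  {
    assume "(fst v - 1, snd v + 1) \<in> Q1"
    then have a1: "a \<ge> 1" using v by (auto simp: Q1_def)
    define p where "p = (d * (2*a - 1), d * (2*b + 1))"
    have e: "D p = d * (2*(a+b))" by (simp add: p_def D_def algebra_simps)
    have "d * 1 \<le> d * (2*(a+b))" by (rule mult_left_mono) (use dv a0 a1 in auto)
    then have Dp: "d \<le> D p" using e by simp
    have "extends_to R v d \<or> extends_to R (a - 1, b + 1) d"
    proof (rule key[OF assms(1), of "a+b" d p])
      fix w assume w: "w \<in> R p" "D w = a + b"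
      obtain t where t: "t \<in> {0..1}"
        "\<bar>real_of_int (fst w) - t * real_of_int (fst p)\<bar> < 3/2"
        "\<bar>real_of_int (snd w) - t * real_of_int (snd p)\<bar> < 3/2"
        using err_bound[OF assms(2) w(1)] by blast
      have "fst w = a \<or> fst w = a - 1"
        apply (rule geo1[of a b "fst w" "snd w" "t * d"])
        using a1 a0 w(2) t(2,3) by (simp_all add: p_def D_def mult.assoc)
      then show "w = v \<or> w = (a - 1, b + 1)" using w v
        by (cases w) (auto simp: D_def)
    next
      fix w assume w: "w \<in> R p" "D w = d"
      obtain t where t: "t \<in> {0..1}"
        "\<bar>real_of_int (fst w) - t * real_of_int (fst p)\<bar> < 3/2"
        "\<bar>real_of_int (snd w) - t * real_of_int (snd p)\<bar> < 3/2"
        using err_bound[OF assms(2) w(1)] by blast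
      have "fst w \<ge> 0 \<and> snd w \<ge> 0"
        apply (rule geo2[where A="2*a-1" and B="2*b+1" and k="a+b" and d=d and wx="fst w" and wy="snd w" and s="t * d"])
        using a1 a0 w(2) t dv by (simp_all add: p_def D_def mult.assoc)
      then show "w \<in> Q1" by (simp add: Q1_def)
    qed (use a0 a1 dv Dp in auto)
    then show "extends_to R (fst v - 1, snd v + 1) d" using assms(5) v by auto
  }
  {
    assume "(fst v + 1, snd v - 1) \<in> Q1"
    then have a1: "b \<ge> 1" using v by (auto simp: Q1_def)
    define p where "p = (d * (2*a + 1), d * (2*b - 1))"
    have e: "D p = d * (2*(a+b))" by (simp add: p_def D_def algebra_simps)
    have "d * 1 \<le> d * (2*(a+b))" by (rule mult_left_mono) (use dv a0 a1 in auto)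
    then have Dp: "d \<le> D p" using e by simp
    have "extends_to R v d \<or> extends_to R (a + 1, b - 1) d"
    proof (rule key[OF assms(1), of "a+b" d p])
      fix w assume w: "w \<in> R p" "D w = a + b"
      obtain t where t: "t \<in> {0..1}"
        "\<bar>real_of_int (fst w) - t * real_of_int (fst p)\<bar> < 3/2"
        "\<bar>real_of_int (snd w) - t * real_of_int (snd p)\<bar> < 3/2"
        using err_bound[OF assms(2) w(1)] by blast
      have "snd w = b \<or> snd w = b - 1"
        apply (rule geo1[of b a "snd w" "fst w" "t * d"])
        using a1 a0 w(2) t(2,3) by (simp_all add: p_def D_def mult.assoc add.commute)
      then show "w = v \<or> w = (a + 1, b - 1)" using w v
        by (cases w) (auto simp: D_def)
    next
      fix w assume w: "w \<in> R p" "D w = d"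
      obtain t where t: "t \<in> {0..1}"
        "\<bar>real_of_int (fst w) - t * real_of_int (fst p)\<bar> < 3/2"
        "\<bar>real_of_int (snd w) - t * real_of_int (snd p)\<bar> < 3/2"
        using err_bound[OF assms(2) w(1)] by blast
      have "fst w \<ge> 0 \<and> snd w \<ge> 0"
        apply (rule geo2[where A="2*a+1" and B="2*b-1" and k="a+b" and d=d and wx="fst w" and wy="snd w" and s="t * d"])
        using a1 a0 w(2) t dv by (simp_all add: p_def D_def mult.assoc)
      then show "w \<in> Q1" by (simp add: Q1_def)
    qed (use a0 a1 dv Dp in auto)
    then show "extends_to R (fst v + 1, snd v - 1) d" using assms(5) v by auto
  }
qed

end
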